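(* Let $X$ be a topological space, $(Z,d)$ a bounded metric space, and $F:X\to 2^Z$ a lower quasicontinuous set-valued mapping. Then $$A=\{x\in X:\ \forall\varepsilon>0\ \exists U\in\mathcal V_X(x),\ \mathrm{diam}(F(U))\le 2\,\mathrm{diam}(F(x))+\varepsilon\}$$ is a residual subset of $X$.
   Context: $2^Z$ is the set of nonempty subsets of $Z$; $\mathcal V_X(x)$ is the set of neighborhoods of $x$ in $X$; $F(U)=\bigcup_{x\in U}F(x)$; $\mathrm{diam}(W)=\sup\{d(u,v):u,v\in W\}$. $F$ is lower quasicontinuous if for each $x_0\in X$, each neighborhood $U$ of $x_0$ and each open $W\subset Z$ with $F(x_0)\cap W\neq\emptyset$, there is an open $O$ with $\emptyset\ne O\subset U$ and $F(x)\cap W\ne\emptyset$ for all $x\in O$. Residual means containing a countable intersection of dense open sets. *)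

theory Defs
  imports "HOL-Analysis.Analysis"
begin

definition is_nhd :: "'a::topological_space set \<Rightarrow> 'a \<Rightarrow> bool" where
  "is_nhd U x \<longleftrightarrow> (\<exists>V. open V \<and> x \<in> V \<and> V \<subseteq> U)"

definition lower_quasicontinuous :: "('a::topological_space \<Rightarrow> 'b::topological_space set) \<Rightarrow> bool" where
  "lower_quasicontinuous F \<longleftrightarrow>
     (\<forall>x0 U W. is_nhd U x0 \<and> open W \<and> F x0 \<inter> W \<noteq> {} \<longrightarrow>
        (\<exists>V. open V \<and> V \<noteq> {} \<and> V \<subseteq> U \<and> (\<forall>x\<in>V. F x \<inter> W \<noteq> {})))"

definition residual :: "'a::topological_space set \<Rightarrow> bool" where
  "residual S \<longleftrightarrow> (\<exists>G::nat \<Rightarrow> 'a set. (\<forall>n. open (G n) \<and> closure (G n) = UNIV) \<and> \<Inter>(range G) \<subseteq> S)"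

end

theory Submission
  imports Defs
begin

lemma key_step:
  fixes F :: "'a::topological_space \<Rightarrow> 'b::metric_space set"
  assumes bnd: "bounded (UNIV :: 'b set)"
    and ne: "\<And>x. F x \<noteq> {}"
    and lqc: "lower_quasicontinuous F"
    and eps: "\<epsilon> > 0" and V: "open V" "V \<noteq> {}"
  shows "\<exists>Q. open Q \<and> Q \<noteq> {} \<and> Q \<subseteq> V \<and>
           (\<forall>y\<in>Q. diameter (\<Union>(F ` Q)) \<le> 2 * diameter (F y) + \<epsilon>)"
proof -
  have bd: "bounded (S::'b set)" for S using bnd bounded_subset by blast
  define D where "D Q = diameter (\<Union>(F ` Q))" for Q
  define M where "M = {D Q | Q. open Q \<and> Q \<noteq> {} \<and> Q \<subseteq> V}"
  define T where "T = Inf M"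
  define \<delta> where "\<delta> = \<epsilon> / 4"
  define \<eta> where "\<eta> = \<epsilon> / 8"
  have dpos: "\<delta> > 0" "\<eta> > 0" using eps by (auto simp: \<delta>_def \<eta>_def)
  have Mne: "M \<noteq> {}" using V by (auto simp: M_def)
  have Mbdd: "bdd_below M" unfolding M_def bdd_below_def
    by (rule exI[of _ 0]) (auto simp: D_def diameter_ge_0 bd)
  have "Inf M < T + \<delta>" using dpos by (simp add: T_def)
  then obtain d where "d \<in> M" "d < T + \<delta>" using cInf_lessD[OF Mne] by blast
  then obtain Q1 where Q1: "open Q1" "Q1 \<noteq> {}" "Q1 \<subseteq> V" "D Q1 < T + \<delta>"
    by (auto simp: M_def)
  have Tle: "T \<le> D Q" if "open Q" "Q \<noteq> {}" "Q \<subseteq> Q1" for Q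
    proof -
    have "Q \<subseteq> V" using that Q1(3) by blast
    then have "D Q \<in> M" unfolding M_def using that by blast
    then show ?thesis unfolding T_def by (rule cInf_lower[OF _ Mbdd])
  qed
  obtain x0 where x0: "x0 \<in> Q1" using Q1 by blast
  obtain z where z: "z \<in> F x0" using ne by blast
  have nhd1: "is_nhd Q1 x0" using Q1 x0 by (auto simp: is_nhd_def)
  obtain Q2 where Q2: "open Q2" "Q2 \<noteq> {}" "Q2 \<subseteq> Q1" "\<forall>x\<in>Q2. F x \<inter> ball z \<eta> \<noteq> {}"
  proof -
    have "z \<in> F x0 \<inter> ball z \<eta>" using z dpos by simp
    then show ?thesis using lqc[unfolded lower_quasicontinuous_def, rule_format, of Q1 x0 "ball z \<eta>"] nhd1 that
      by blast
  qed
  have TQ2: "T \<le> D Q2" using Tle Q2 by blast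
  obtain y c where yc: "y \<in> Q2" "c \<in> F y" "dist c z \<ge> (T - \<delta>) / 2"
  proof (cases "T - \<delta> > 0")
    case True
    then obtain a b where ab: "a \<in> \<Union>(F ` Q2)" "b \<in> \<Union>(F ` Q2)" "T - \<delta> < dist a b"
      proof -
      have "T - \<delta> < D Q2" using TQ2 dpos by linarith
      then show ?thesis using diameter_lower_bounded[OF bd True, of "\<Union>(F ` Q2)"] that unfolding D_def by blast
    qed
    then obtain y1 y2 where y12: "y1 \<in> Q2" "a \<in> F y1" "y2 \<in> Q2" "b \<in> F y2" by blast
    have "dist a b \<le> dist a z + dist b z" using dist_triangle[of a b z] dist_commute[of z b] by linarith
    then show ?thesis
    proof (cases "dist a z \<ge> dist b z")
      case True
      then have "T - \<delta> \<le> 2 * dist a z" using ab \<open>dist a b \<le> dist a z + dist b z\<close> by linarith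
      then have "(T - \<delta>) / 2 \<le> dist a z" by (simp add: field_simps)
      then show ?thesis using that[of y1 a] y12 by blast
    next
      case False
      then have "T - \<delta> \<le> 2 * dist b z" using ab \<open>dist a b \<le> dist a z + dist b z\<close> by linarith
      then have "(T - \<delta>) / 2 \<le> dist b z" by (simp add: field_simps)
      then show ?thesis using that[of y2 b] y12 by blast
    qed
  next
    case False
    obtain y where "y \<in> Q2" using Q2 by blast
    moreover obtain c where "c \<in> F y" using ne by blast
    moreover have "(T - \<delta>) / 2 \<le> 0" using False by simp
    moreover have "0 \<le> dist c z" by simp
    ultimately show ?thesis using that[of y c] order_trans by blast
  qed
  have nhd2: "is_nhd Q2 y" using Q2 yc by (auto simp: is_nhd_def)
  obtain Q3 where Q3: "open Q3" "Q3 \<noteq> {}" "Q3 \<subseteq> Q2" "\<forall>x\<in>Q3. F x \<inter> ball c \<eta> \<noteq> {}"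
  proof -
    have "c \<in> F y \<inter> ball c \<eta>" using yc dpos by simp
    then show ?thesis using lqc[unfolded lower_quasicontinuous_def, rule_format, of Q2 y "ball c \<eta>"] nhd2 that
      by blast
  qed
  show ?thesis
  proof (intro exI[of _ Q3] conjI ballI)
    fix y' assume y': "y' \<in> Q3"
    obtain p where p: "p \<in> F y'" "dist z p < \<eta>" proof -
      have "y' \<in> Q2" using Q3 y' by blast
      then have "F y' \<inter> ball z \<eta> \<noteq> {}" using Q2 by blast
      then show ?thesis using that by (auto simp: mem_ball)
    qed
    obtain q where q: "q \<in> F y'" "dist c q < \<eta>" proof -
      have "F y' \<inter> ball c \<eta> \<noteq> {}" using Q3 y' by blast
      then show ?thesis using that by (auto simp: mem_ball)
    qed
    have "dist c z \<le> dist c q + dist q p + dist p z"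
      using dist_triangle[of c z q] dist_triangle[of q z p] by linarith
    moreover have "dist p z = dist z p" by (simp add: dist_commute)
    moreover have "dist q p \<le> diameter (F y')" by (rule diameter_bounded_bound[OF bd q(1) p(1)])
    moreover have "T - \<delta> \<le> 2 * dist c z" using yc(3) by (simp add: field_simps)
    ultimately have lb: "T - \<delta> - 4 * \<eta> \<le> 2 * diameter (F y')" using p q by linarith
    have "D Q3 \<le> D Q1" unfolding D_def using Q3 Q2 by (intro diameter_subset) (auto intro: bd)
    with Q1 lb show "diameter (\<Union>(F ` Q3)) \<le> 2 * diameter (F y') + \<epsilon>"
    proof -
      have "2 * \<delta> + 4 * \<eta> = \<epsilon>" by (simp add: \<delta>_def \<eta>_def)
      then show ?thesis using Q1(4) lb \<open>D Q3 \<le> D Q1\<close> unfolding D_def by linarith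
    qed
  qed (use Q3 Q2 Q1 in auto)
qed

theorem lemma3p2:
  fixes F :: "'a::topological_space \<Rightarrow> 'b::metric_space set"
  assumes "bounded (UNIV :: 'b set)"
    and "\<And>x. F x \<noteq> {}"
    and "lower_quasicontinuous F"
  shows "residual {x. \<forall>\<epsilon>>0. \<exists>U. is_nhd U x \<and>
            diameter (\<Union>(F ` U)) \<le> 2 * diameter (F x) + \<epsilon>}"
proof -
  define A where "A e = {x. \<exists>U. is_nhd U x \<and> diameter (\<Union>(F ` U)) \<le> 2 * diameter (F x) + e}" for e
  define G where "G n = interior (A (1 / real (Suc n)))" for n
  have sub: "Q \<subseteq> A e" if "open Q" "\<forall>y\<in>Q. diameter (\<Union>(F ` Q)) \<le> 2 * diameter (F y) + e" for Q e
    using that by (auto simp: A_def is_nhd_def)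
  have dense: "closure (G n) = UNIV" for n
  proof (rule ccontr)
    assume "closure (G n) \<noteq> UNIV"
    define V where "V = - closure (G n)"
    have V: "open V" "V \<noteq> {}" using \<open>closure (G n) \<noteq> UNIV\<close> by (auto simp: V_def)
    obtain Q where Q: "open Q" "Q \<noteq> {}" "Q \<subseteq> V"
      "\<forall>y\<in>Q. diameter (\<Union>(F ` Q)) \<le> 2 * diameter (F y) + 1 / real (Suc n)"
      using key_step[OF assms, of "1 / real (Suc n)" V] V by auto
    have "Q \<subseteq> G n" unfolding G_def using sub[OF Q(1) Q(4)] Q(1) by (simp add: interior_maximal)
    then show False using Q closure_subset unfolding V_def by blast
  qed
  show ?thesis unfolding residual_def
  proof (intro exI[of _ G] conjI allI)
    fix n show "open (G n)" by (simp add: G_def)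
    show "closure (G n) = UNIV" by (rule dense)
  next
    show "\<Inter>(range G) \<subseteq> {x. \<forall>\<epsilon>>0. \<exists>U. is_nhd U x \<and>
            diameter (\<Union>(F ` U)) \<le> 2 * diameter (F x) + \<epsilon>}"
    proof (intro subsetI CollectI allI impI)
      fix x and e :: real
      assume x: "x \<in> \<Inter>(range G)" and e: "e > 0"
      obtain n where n: "1 / real (Suc n) < e" using reals_Archimedean[OF e] by (auto simp: divide_inverse)
      have "x \<in> A (1 / real (Suc n))" using x interior_subset unfolding G_def by blast
      then obtain U where "is_nhd U x" "diameter (\<Union>(F ` U)) \<le> 2 * diameter (F x) + 1 / real (Suc n)"
        by (auto simp: A_def)
      then show "\<exists>U. is_nhd U x \<and> diameter (\<Union>(F ` U)) \<le> 2 * diameter (F x) + e"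
        using n by (intro exI[of _ U]) auto
    qed
  qed
qed

end
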